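(* Let $F\colon Q^\Delta\to Q^{\Delta'}$ be one of the weighted foldings in the context, and let $\mathcal M_F=\mathrm{mod}\,KQ^\Delta$ and $\mathcal D_F=D^b(\mathcal M_F)$ carry the $\Lambda^+_{2n+1}$-coefficient structures described in the context. Let $\Gamma_{\mathcal M_F}=\{M\in\mathcal M_F: M\text{ indecomposable and }\pi_F(M)\text{ a positive root of }\Delta'\}$ and $\Gamma_{\mathcal D_F}=\{X\in\mathcal D_F: X\text{ indecomposable and }\partial_F(X)\text{ a root of }\Delta'\}$. Then $\Gamma_{\mathcal M_F}$ and $\Gamma_{\mathcal D_F}$ are minimal sets of $\Lambda^+_{2n+1}$-generators of $\mathcal M_F$ and $\mathcal D_F$ respectively, and each is unique up to replacing elements by isomorphic objects.
   Context: $K$ algebraically closed. Foldings $F\colon Q^\Delta\to Q^{\Delta'}$: (I) $n\ge2$, bipartite $Q^{A_{2n}}$ on vertices $0,\dots,2n-1$ (arrows between $i,i+1$; even vertices all sources or all sinks), weights $\kappa(i)=\theta_i:=U_i(\cos\frac{\pi}{2n+1})$ ($U_k$ Chebyshev of second kind), onto $Q^{I_2(2n+1)}$ (vertices $[0],[1]$, one arrow of weight $2\cos\frac{\pi}{2n+1}$), $i\mapsto[i\bmod 2]$. (H) $n=2$, $m\in\{3,4\}$, $Q^\Delta$ of type $D_6/E_8$ with vertices $1..m,\phi_1..\phi_m$, edges $i-(i+1)$, $\phi_i-\phi_{i+1}$ ($i\le m-2$), $(m-1)-\phi_m$, $\phi_{m-1}-m$, $\phi_{m-1}-\phi_m$,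 edges between consecutive columns $\{i,\phi_i\},\{i+1,\phi_{i+1}\}$ oriented alike, weights $\kappa(i)=1$, $\kappa(\phi_i)=\varphi=2\cos(\pi/5)$, onto the path $Q^{H_m}$ ($i,\phi_i\mapsto[i]$; arrow weights 1 except $\varphi$ on $[m-1]-[m]$). $\pi_F(M)=d_F(\underline{\dim}M)$ with $d_F(v)_{[i]}=\sum_{F(j)=[i]}\kappa(j)v_j$; for $X\cong\bigoplus_l\Sigma^lM_l$ in $\mathcal D_F$, $\partial_F(X)=\sum_l(-1)^l\pi_F(M_l)$. Roots of $\Delta'$ are those of the Coxeter group with diagram the underlying graph of $Q^{\Delta'}$, written in coordinates of unit-length simple roots $\alpha_{[i]}$ with $(\alpha_{[i]},\alpha_{[j]})=-\cos(\pi/m_{ij})$ (arrow weight $2\cos(\pi/m_{ij})$). $\Lambda^+_{2n+1}$: commutative semiring generated over $\mathbb Z_{\ge0}$ by $\psi_1..\psi_{n-1}$ with $\psi_k\psi_l=\sum_{j=0}^l\psi_{k-l+2j}$ ($k\ge l$), $\psi_0=1$, $\psi_{2n}=0$, $\psi_k=\psi_{2n-1-k}$; its Grothendieck ring $\Lambda_{2n+1}$ has $\mathbb Z$-basis $\psi_0,\dots,\psi_{n-1}$ and is ordered by $r<s$ iff $\sigma(r)<\sigma(s)$, $\sigma(\psi_k)=\theta_k\in\mathbb R$. The coefficient structure (endofunctors $r$ satisfying additivity, multiplicativity, $1\mapsto\mathrm{id}$, $0\mapsto0$, exactness/triangulatedness and faithfulness on Ext) is on objects as follows: for each positive root $\alpha$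 of $\Delta'$ and $0\le k\le n-1$ there is up to isomorphism a unique indecomposable $M^{(k)}_\alpha$ with $\pi_F(M^{(k)}_\alpha)=\theta_k\alpha$, these exhaust the indecomposables, and $\psi_kM^{(l)}_\alpha\cong\bigoplus_{j=0}^lM^{(k-l+2j)}_\alpha$ for $l\le k$ (indices reduced by $M^{(2n-1-k)}=M^{(k)}$, $M^{(2n)}=0$), extended additively; on $\mathcal D_F$, $r\Sigma^kX=\Sigma^k rX$. Definitions: in an abelian (resp. triangulated) coefficient category, $N$ is $R_+$-generated by $M$ if there are $r,s\in R_+$ and a split exact sequence $0\to sM\to rM\to L\to0$ (resp. split triangle $sM\to rM\to L\to\Sigma sM$ with first morphism a monomorphism) with $N\cong L$; $r-s$ is the $R$-index. For a set $\Gamma$ of objects, $\mathcal M(\Gamma)$ is the full subcategory of finite direct sums of objects $R_+$-generated by elements of $\Gamma$; $\Gamma$ is a set of $R_+$-generators if $\mathcal M(\Gamma)\simeq\mathcal M$. On $\mathcal M(\Gamma)$, $L_1\le L_2$ iff $L_1\cong L_2$ or $L_1,L_2$ are generated by a common $M\in\Gamma$ with $R$-indices $r_1<r_2$. $\Gamma$ is basic if its elements are pairwise non-isomorphic indecomposables, and a basic $\Gamma$ is minimal if for every basic set of generators $\Gamma'$ there is an injective map $\theta\colon\Gamma\to\Gamma'$ with $M\le\theta(M)$ in $\mathcal M(\Gamma\cup\Gamma')$ for all $M\in\Gamma$. *)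

theory Defs
  imports Complex_Main "HOL-Library.Multiset"
begin

text \<open>FoldI n : folding (I) of A_{2n} onto I_2(2n+1) (requires n >= 2).
      FoldH m : folding (H) of D_6 / E_8 onto H_m (requires m in {3,4}); here n = 2.\<close>
datatype folding = FoldI nat | FoldH nat

definition valid_folding :: "folding \<Rightarrow> bool" where
  "valid_folding F = (case F of FoldI n \<Rightarrow> 2 \<le> n | FoldH m \<Rightarrow> m \<in> {3, 4})"

text \<open>the parameter n of the coefficient semiring Lambda^+_{2n+1}\<close>
fun npar :: "folding \<Rightarrow> nat" where
  "npar (FoldI n) = n"
| "npar (FoldH m) = 2"

text \<open>rank of Delta' (vertices of Q^{Delta'} are 0..rk-1; for H_m vertex [i] is i-1)\<close>
fun rk :: "folding \<Rightarrow> nat" where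
  "rk (FoldI n) = 2"
| "rk (FoldH m) = m"

text \<open>Coxeter labels m_ij of the diagram of Q^{Delta'} (m_ii = 1, non-adjacent = 2)\<close>
fun coxm :: "folding \<Rightarrow> nat \<Rightarrow> nat \<Rightarrow> nat" where
  "coxm (FoldI n) i j = (if i = j then 1 else 2 * n + 1)"
| "coxm (FoldH m) i j = (if i = j then 1
      else if i + 1 = j \<or> j + 1 = i then (if max i j = m - 1 then 5 else 3) else 2)"

definition gram :: "folding \<Rightarrow> nat \<Rightarrow> nat \<Rightarrow> real" where
  "gram F i j = - cos (pi / real (coxm F i j))"

definition bform :: "folding \<Rightarrow> (nat \<Rightarrow> real) \<Rightarrow> (nat \<Rightarrow> real) \<Rightarrow> real" where
  "bform F v w = (\<Sum>i<rk F. \<Sum>j<rk F. v i * gram F i j * w j)"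

definition sroot :: "nat \<Rightarrow> (nat \<Rightarrow> real)" where
  "sroot i = (\<lambda>j. if j = i then 1 else 0)"

definition refl :: "folding \<Rightarrow> nat \<Rightarrow> (nat \<Rightarrow> real) \<Rightarrow> (nat \<Rightarrow> real)" where
  "refl F i v = (\<lambda>j. v j - 2 * bform F v (sroot i) * sroot i j)"

text \<open>roots of Delta': the orbit of the (unit-length) simple roots under the Coxeter group\<close>
inductive_set roots :: "folding \<Rightarrow> (nat \<Rightarrow> real) set" for F where
  simple: "i < rk F \<Longrightarrow> sroot i \<in> roots F"
| reflect: "v \<in> roots F \<Longrightarrow> i < rk F \<Longrightarrow> refl F i v \<in> roots F"

definition pos_roots :: "folding \<Rightarrow> (nat \<Rightarrow> real) set" where
  "pos_roots F = {v \<in> roots F. \<forall>i. 0 \<le> v i}"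

fun chebU :: "nat \<Rightarrow> real \<Rightarrow> real" where
  "chebU 0 x = 1"
| "chebU (Suc 0) x = 2 * x"
| "chebU (Suc (Suc k)) x = 2 * x * chebU (Suc k) x - chebU k x"

definition theta :: "folding \<Rightarrow> nat \<Rightarrow> real" where
  "theta F k = chebU k (cos (pi / real (2 * npar F + 1)))"

text \<open>Elements of Lambda^+_{2n+1}: N-combinations of psi_0..psi_{n-1}, as multisets of indices.\<close>
definition Rplus :: "folding \<Rightarrow> nat multiset set" where
  "Rplus F = {r. set_mset r \<subseteq> {..<npar F}}"

definition sigma :: "folding \<Rightarrow> nat multiset \<Rightarrow> real" where
  "sigma F r = (\<Sum>k\<in>#r. theta F k)"

text \<open>index reduction M^(2n-1-k) = M^(k)\<close>
definition red :: "folding \<Rightarrow> nat \<Rightarrow> nat" where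
  "red F i = (if i < npar F then i else 2 * npar F - 1 - i)"

text \<open>psi_k M^(l) = sum_{j=0}^{min k l} M^(|k-l|+2j)\<close>
definition fusion :: "folding \<Rightarrow> nat \<Rightarrow> nat \<Rightarrow> nat multiset" where
  "fusion F k l = image_mset (\<lambda>j. red F (max k l - min k l + 2 * j)) (mset [0..<Suc (min k l)])"

section \<open>Object-level models of M_F and D_F (Krull-Schmidt: objects up to iso = multisets
  of indecomposables). M^(k)_alpha is the label (alpha,k); Sigma^l M^(k)_alpha is (alpha,k,l).\<close>

type_synonym mlabel = "(nat \<Rightarrow> real) \<times> nat"
type_synonym dlabel = "(nat \<Rightarrow> real) \<times> nat \<times> int"

definition ObjM :: "folding \<Rightarrow> mlabel multiset set" where
  "ObjM F = {X. \<forall>p\<in>#X. fst p \<in> pos_roots F \<and> snd p < npar F}"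

definition ObjD :: "folding \<Rightarrow> dlabel multiset set" where
  "ObjD F = {X. \<forall>p\<in>#X. fst p \<in> pos_roots F \<and> fst (snd p) < npar F}"

definition actM :: "folding \<Rightarrow> nat multiset \<Rightarrow> mlabel multiset \<Rightarrow> mlabel multiset" where
  "actM F r X = (\<Sum>k\<in>#r. \<Sum>p\<in>#X. image_mset (\<lambda>k'. (fst p, k')) (fusion F k (snd p)))"

definition actD :: "folding \<Rightarrow> nat multiset \<Rightarrow> dlabel multiset \<Rightarrow> dlabel multiset" where
  "actD F r X = (\<Sum>k\<in>#r. \<Sum>p\<in>#X.
      image_mset (\<lambda>k'. (fst p, k', snd (snd p))) (fusion F k (fst (snd p))))"

definition piF :: "folding \<Rightarrow> mlabel multiset \<Rightarrow> (nat \<Rightarrow> real)" where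
  "piF F X = (\<lambda>i. \<Sum>p\<in>#X. theta F (snd p) * fst p i)"

definition partialF :: "folding \<Rightarrow> dlabel multiset \<Rightarrow> (nat \<Rightarrow> real)" where
  "partialF F X = (\<lambda>i. \<Sum>p\<in>#X. (if even (snd (snd p)) then 1 else -1)
                              * theta F (fst (snd p)) * fst p i)"

definition indec :: "'b multiset \<Rightarrow> bool" where
  "indec X = (size X = 1)"

text \<open>L is R_+-generated by M with witnesses r,s (split sequence: rM = sM (+) L); index r - s\<close>
definition gen_idx :: "(nat multiset \<Rightarrow> 'b multiset \<Rightarrow> 'b multiset) \<Rightarrow> nat multiset set
    \<Rightarrow> 'b multiset \<Rightarrow> 'b multiset \<Rightarrow> nat multiset \<Rightarrow> nat multiset \<Rightarrow> bool" where
  "gen_idx act R L M r s = (r \<in> R \<and> s \<in> R \<and> act r M = act s M + L)"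

definition gen_by :: "(nat multiset \<Rightarrow> 'b multiset \<Rightarrow> 'b multiset) \<Rightarrow> nat multiset set
    \<Rightarrow> 'b multiset \<Rightarrow> 'b multiset \<Rightarrow> bool" where
  "gen_by act R L M = (\<exists>r s. gen_idx act R L M r s)"

definition Mspan :: "(nat multiset \<Rightarrow> 'b multiset \<Rightarrow> 'b multiset) \<Rightarrow> nat multiset set
    \<Rightarrow> 'b multiset set \<Rightarrow> 'b multiset set" where
  "Mspan act R \<Gamma> = {sum_list xs | xs. \<forall>x\<in>set xs. \<exists>M\<in>\<Gamma>. gen_by act R x M}"

definition generators :: "(nat multiset \<Rightarrow> 'b multiset \<Rightarrow> 'b multiset) \<Rightarrow> nat multiset set
    \<Rightarrow> 'b multiset set \<Rightarrow> 'b multiset set \<Rightarrow> bool" where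
  "generators act R Obj \<Gamma> = (\<Gamma> \<subseteq> Obj \<and> Mspan act R \<Gamma> = Obj)"

definition basic :: "'b multiset set \<Rightarrow> bool" where
  "basic \<Gamma> = (\<forall>X\<in>\<Gamma>. indec X)"

definition leqG :: "(nat multiset \<Rightarrow> 'b multiset \<Rightarrow> 'b multiset) \<Rightarrow> nat multiset set
    \<Rightarrow> (nat multiset \<Rightarrow> real) \<Rightarrow> 'b multiset set \<Rightarrow> 'b multiset \<Rightarrow> 'b multiset \<Rightarrow> bool" where
  "leqG act R sig \<Gamma> L1 L2 = (L1 = L2 \<or>
     (\<exists>M\<in>\<Gamma>. \<exists>r1 s1 r2 s2. gen_idx act R L1 M r1 s1 \<and> gen_idx act R L2 M r2 s2
        \<and> sig r1 - sig s1 < sig r2 - sig s2))"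

definition minimal :: "(nat multiset \<Rightarrow> 'b multiset \<Rightarrow> 'b multiset) \<Rightarrow> nat multiset set
    \<Rightarrow> (nat multiset \<Rightarrow> real) \<Rightarrow> 'b multiset set \<Rightarrow> 'b multiset set \<Rightarrow> bool" where
  "minimal act R sig Obj \<Gamma> = (basic \<Gamma> \<and>
     (\<forall>\<Gamma>'. basic \<Gamma>' \<and> generators act R Obj \<Gamma>' \<longrightarrow>
        (\<exists>\<theta>. inj_on \<theta> \<Gamma> \<and> \<theta> ` \<Gamma> \<subseteq> \<Gamma>' \<and> (\<forall>M\<in>\<Gamma>. leqG act R sig (\<Gamma> \<union> \<Gamma>') M (\<theta> M)))))"

definition min_gens :: "(nat multiset \<Rightarrow> 'b multiset \<Rightarrow> 'b multiset) \<Rightarrow> nat multiset set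
    \<Rightarrow> (nat multiset \<Rightarrow> real) \<Rightarrow> 'b multiset set \<Rightarrow> 'b multiset set \<Rightarrow> bool" where
  "min_gens act R sig Obj \<Gamma> = (generators act R Obj \<Gamma> \<and> minimal act R sig Obj \<Gamma>)"

definition GammaM :: "folding \<Rightarrow> mlabel multiset set" where
  "GammaM F = {X \<in> ObjM F. indec X \<and> piF F X \<in> pos_roots F}"

definition GammaD :: "folding \<Rightarrow> dlabel multiset set" where
  "GammaD F = {X \<in> ObjD F. indec X \<and> partialF F X \<in> roots F}"

end

theory Submission
  imports Defs
begin

lemma mem_sum_list_mset: "p \<in># sum_list xs \<Longrightarrow> \<exists>x\<in>set xs. p \<in># (x::'a multiset)"
  by (induction xs) auto

lemma sub_sum_list_mset: "x \<in> set xs \<Longrightarrow> x \<subseteq># sum_list (xs::'a multiset list)"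
  by (induction xs) (auto simp: subset_mset.add_increasing2 subset_mset.add_increasing)

lemma indec_single: "indec X \<Longrightarrow> \<exists>q. X = {#q#}"
  by (simp add: indec_def size_1_singleton_mset)

lemma basic_single: "basic G \<Longrightarrow> X \<in> G \<Longrightarrow> \<exists>q. X = {#q#}"
  by (simp add: basic_def indec_single)

locale genset =
  fixes n :: nat and th :: "nat \<Rightarrow> real" and fu :: "nat \<Rightarrow> nat \<Rightarrow> nat multiset"
    and mk :: "'k \<Rightarrow> nat \<Rightarrow> 'b" and keyf :: "'b \<Rightarrow> 'k" and ix :: "'b \<Rightarrow> nat"
    and K :: "'k set"
    and act :: "nat multiset \<Rightarrow> 'b multiset \<Rightarrow> 'b multiset"
    and Obj :: "'b multiset set" and R :: "nat multiset set" and sig :: "nat multiset \<Rightarrow> real"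
    and Gam :: "'b multiset set"
  assumes npos: "0 < n"
   and th0: "th 0 = 1"
   and thgt: "\<And>k. 0 < k \<Longrightarrow> k < n \<Longrightarrow> 1 < th k"
   and fu0: "\<And>k. k < n \<Longrightarrow> fu k 0 = {#k#}"
   and fusum: "\<And>k l. k < n \<Longrightarrow> l < n \<Longrightarrow> (\<Sum>k'\<in>#fu k l. th k') = th k * th l"
   and mk_key: "\<And>a k. keyf (mk a k) = a" and mk_ix: "\<And>a k. ix (mk a k) = k"
   and mk_surj: "\<And>p. mk (keyf p) (ix p) = p"
   and act_eq: "\<And>r X. act r X = (\<Sum>k\<in>#r. \<Sum>p\<in>#X. image_mset (\<lambda>k'. mk (keyf p) k') (fu k (ix p)))"
   and Obj_def: "Obj = {X. \<forall>p\<in>#X. keyf p \<in> K \<and> ix p < n}"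
   and R_def: "R = {r. set_mset r \<subseteq> {..<n}}"
   and sig_def: "sig = (\<lambda>r. \<Sum>k\<in>#r. th k)"
   and Gam_def: "Gam = {{#mk a 0#} | a. a \<in> K}"
begin

lemma th_ge: "k < n \<Longrightarrow> 1 \<le> th k"
  using thgt[of k] th0 by (cases "k = 0") auto

lemma act_single: "act r {#g#} = (\<Sum>k\<in>#r. image_mset (mk (keyf g)) (fu k (ix g)))"
  by (simp add: act_eq)

lemma act_zero: "set_mset r \<subseteq> {..<n} \<Longrightarrow> act r {#mk a 0#} = image_mset (mk a) r"
  unfolding act_single mk_key mk_ix
  by (induction r) (auto simp: fu0 npos)

lemma key_act: "p \<in># act r {#g#} \<Longrightarrow> keyf p = keyf g"
  unfolding act_single by (auto simp: mk_key)

lemma w_act: "set_mset r \<subseteq> {..<n} \<Longrightarrow> ix g < n \<Longrightarrow>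
   (\<Sum>p\<in>#act r {#g#}. th (ix p)) = sig r * th (ix g)"
  unfolding act_single sig_def
proof (induction r)
  case empty then show ?case by simp
next
  case (add k r)
  then have "(\<Sum>p\<in>#image_mset (mk (keyf g)) (fu k (ix g)). th (ix p)) = th k * th (ix g)"
    by (simp add: image_mset.compositionality comp_def mk_ix fusum)
  with add show ?case by (simp add: algebra_simps)
qed

lemma idx_eq:
  assumes "gen_idx act R L {#g#} r s" "ix g < n"
  shows "(sig r - sig s) * th (ix g) = (\<Sum>p\<in>#L. th (ix p))"
proof -
  have r: "set_mset r \<subseteq> {..<n}" and s: "set_mset s \<subseteq> {..<n}"
    and e: "act r {#g#} = act s {#g#} + L" using assms(1) by (auto simp: gen_idx_def R_def)
  have "(\<Sum>p\<in>#act r {#g#}. th (ix p)) = (\<Sum>p\<in>#act s {#g#}. th (ix p)) + (\<Sum>p\<in>#L. th (ix p))"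
    unfolding e by simp
  then show ?thesis using w_act[OF r assms(2)] w_act[OF s assms(2)] by (simp add: algebra_simps)
qed

lemma single_gen: "keyf p \<in> K \<Longrightarrow> ix p < n \<Longrightarrow> gen_idx act R {#p#} {#mk (keyf p) 0#} {#ix p#} {#}"
  unfolding gen_idx_def R_def using act_zero[of "{#ix p#}" "keyf p"] act_zero[of "{#}" "keyf p"]
  by (simp add: mk_surj)

lemma Gam_Obj: "Gam \<subseteq> Obj"
  by (auto simp: Gam_def Obj_def mk_key mk_ix npos)

lemma span_sub: "Mspan act R Gam \<subseteq> Obj"
proof
  fix X assume "X \<in> Mspan act R Gam"
  then obtain xs where X: "X = sum_list xs" and xs: "\<forall>x\<in>set xs. \<exists>M\<in>Gam. gen_by act R x M"
    by (auto simp: Mspan_def)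
  show "X \<in> Obj" unfolding Obj_def
  proof (intro CollectI ballI)
    fix p assume "p \<in># X"
    then have "p \<in># sum_list xs" using X by simp
    from mem_sum_list_mset[OF this] obtain x where x: "x \<in> set xs" "p \<in># x" by blast
    from xs x(1) obtain M where M: "M \<in> Gam" "gen_by act R x M" by blast
    from M(1) obtain a where a: "a \<in> K" and Ma: "M = {#mk a 0#}" unfolding Gam_def by blast
    from M(2) Ma obtain r s where g: "gen_idx act R x {#mk a 0#} r s" unfolding gen_by_def by blast
    then have r: "set_mset r \<subseteq> {..<n}" and e: "act r {#mk a 0#} = act s {#mk a 0#} + x"
      by (auto simp: gen_idx_def R_def)
    have "p \<in># act r {#mk a 0#}" using x(2) e by simp
    then have "p \<in># image_mset (mk a) r" using act_zero[OF r] by simp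
    then show "keyf p \<in> K \<and> ix p < n" using a r by (auto simp: mk_key mk_ix)
  qed
qed

lemma span_sup: "Obj \<subseteq> Mspan act R Gam"
proof
  fix X assume "X \<in> Obj"
  then have "\<forall>p\<in>#X. keyf p \<in> K \<and> ix p < n" by (simp add: Obj_def)
  then have "\<exists>xs. X = sum_list xs \<and> (\<forall>x\<in>set xs. \<exists>M\<in>Gam. gen_by act R x M)"
  proof (induction X)
    case empty then show ?case by (intro exI[of _ "[]"]) simp
  next
    case (add p X)
    then obtain xs where xs: "X = sum_list xs" "\<forall>x\<in>set xs. \<exists>M\<in>Gam. gen_by act R x M" by auto
    have "gen_by act R {#p#} {#mk (keyf p) 0#}" using add.prems single_gen
      by (auto simp: gen_by_def)
    moreover have "{#mk (keyf p) 0#} \<in> Gam" using add.prems by (auto simp: Gam_def)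
    ultimately show ?case using xs by (intro exI[of _ "{#p#} # xs"]) auto
  qed
  then show "X \<in> Mspan act R Gam" by (auto simp: Mspan_def)
qed

lemma gens: "generators act R Obj Gam"
  using span_sub span_sup Gam_Obj by (auto simp: generators_def)

lemma span_single:
  assumes "{#p#} \<in> Mspan act R G" "basic G"
  shows "\<exists>q. {#q#} \<in> G \<and> gen_by act R {#p#} {#q#}"
proof -
  obtain xs where X: "{#p#} = sum_list xs" and xs: "\<forall>x\<in>set xs. \<exists>M\<in>G. gen_by act R x M"
    using assms(1) by (auto simp: Mspan_def)
  have "p \<in># sum_list xs" using X[symmetric] by simp
  then obtain x where x: "x \<in> set xs" "p \<in># x" using mem_sum_list_mset[of p xs] by auto
  have xs1: "x \<subseteq># {#p#}" using sub_sum_list_mset[OF x(1)] X by simp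
  have "x = {#p#}" using xs1 mset_subset_eq_single[OF x(2)] by (rule subset_mset.antisym)
  moreover obtain M where "M \<in> G" "gen_by act R x M" using xs x by auto
  moreover then obtain q where "M = {#q#}" using assms(2) basic_single by blast
  ultimately show ?thesis by auto
qed

lemma has_key:
  assumes "generators act R Obj G" "basic G" "a \<in> K"
  shows "\<exists>q. {#q#} \<in> G \<and> keyf q = a"
proof -
  have "{#mk a 0#} \<in> Mspan act R G" using assms Gam_Obj by (auto simp: generators_def Gam_def)
  then obtain q where q: "{#q#} \<in> G" "gen_by act R {#mk a 0#} {#q#}" using span_single assms(2) by blast
  then obtain r s where "act r {#q#} = act s {#q#} + {#mk a 0#}" by (auto simp: gen_by_def gen_idx_def)
  then have "mk a 0 \<in># act r {#q#}" by simp
  then have "keyf q = a" using key_act[of "mk a 0" r q] mk_key by simp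
  with q show ?thesis by auto
qed

lemma minim: "minimal act R sig Obj Gam"
  unfolding minimal_def
proof (intro conjI allI impI)
  show "basic Gam" by (auto simp: basic_def Gam_def indec_def)
next
  fix G assume G: "basic G \<and> generators act R Obj G"
  define \<theta> where "\<theta> M = (if M \<in> G then M else (SOME M'. \<exists>q. M' = {#q#} \<and> M' \<in> G \<and> keyf q = keyf (THE p. M = {#p#})))" for M
  have th_a: "\<theta> {#mk a 0#} \<in> G \<and> (\<exists>q. \<theta> {#mk a 0#} = {#q#} \<and> keyf q = a)" if a: "a \<in> K" for a
  proof (cases "{#mk a 0#} \<in> G")
    case True then show ?thesis by (auto simp: \<theta>_def mk_key)
  next
    case False
    obtain q where "{#q#} \<in> G" "keyf q = a" using has_key G a by blast
    then have "\<exists>M'. \<exists>q. M' = {#q#} \<and> M' \<in> G \<and> keyf q = keyf (THE p. {#mk a 0#} = {#p#})"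
      by (auto simp: mk_key)
    then have "\<exists>q. \<theta> {#mk a 0#} = {#q#} \<and> \<theta> {#mk a 0#} \<in> G \<and> keyf q = a"
      using False unfolding \<theta>_def apply (simp add: mk_key)
      using someI_ex[of "\<lambda>M'. \<exists>q. M' = {#q#} \<and> M' \<in> G \<and> keyf q = a"] by blast
    then show ?thesis by auto
  qed
  show "\<exists>\<theta>. inj_on \<theta> Gam \<and> \<theta> ` Gam \<subseteq> G \<and> (\<forall>M\<in>Gam. leqG act R sig (Gam \<union> G) M (\<theta> M))"
  proof (intro exI[of _ \<theta>] conjI ballI)
    show "inj_on \<theta> Gam"
    proof (rule inj_onI)
      fix M1 M2 assume "M1 \<in> Gam" "M2 \<in> Gam" "\<theta> M1 = \<theta> M2"
      then obtain a b where ab: "a \<in> K" "b \<in> K" "M1 = {#mk a 0#}" "M2 = {#mk b 0#}" "\<theta> {#mk a 0#} = \<theta> {#mk b 0#}"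
        by (auto simp: Gam_def)
      then have "a = b" using th_a[of a] th_a[of b] by auto
      then show "M1 = M2" using ab by simp
    qed
    show "\<theta> ` Gam \<subseteq> G" using th_a by (auto simp: Gam_def)
    fix M assume "M \<in> Gam"
    then obtain a where a: "a \<in> K" "M = {#mk a 0#}" by (auto simp: Gam_def)
    show "leqG act R sig (Gam \<union> G) M (\<theta> M)"
    proof (cases "M \<in> G")
      case True then show ?thesis by (simp add: \<theta>_def leqG_def)
    next
      case False
      obtain q where q: "\<theta> M = {#q#}" "keyf q = a" "\<theta> M \<in> G" using th_a[OF a(1)] a(2) by auto
      have "{#q#} \<in> Obj" using q G by (auto simp: generators_def)
      then have qn: "ix q < n" "keyf q \<in> K" by (auto simp: Obj_def)
      have "ix q \<noteq> 0"
      proof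
        assume "ix q = 0"
        then have "q = mk a 0" using mk_surj[of q] q(2) by simp
        then show False using False q a by simp
      qed
      then have lt: "1 < th (ix q)" using thgt qn by simp
      have g1: "gen_idx act R M M {#0#} {#}" using single_gen[of "mk a 0"] a by (simp add: mk_key mk_ix npos)
      have g2: "gen_idx act R (\<theta> M) M {#ix q#} {#}" using single_gen[of q] q qn a by simp
      have "sig {#0#} - sig {#} < sig {#ix q#} - sig {#}" using lt th0 by (simp add: sig_def)
      then show ?thesis unfolding leqG_def using g1 g2 \<open>M \<in> Gam\<close> by blast
    qed
  qed
qed

lemma mingens: "min_gens act R sig Obj Gam"
  using gens minim by (simp add: min_gens_def)

lemma uniq:
  assumes "min_gens act R sig Obj G"
  shows "G = Gam"
proof -
  have G: "generators act R Obj G" "basic G" "minimal act R sig Obj G"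
    using assms by (auto simp: min_gens_def minimal_def)
  have Gm: "basic Gam \<and> generators act R Obj Gam" using gens by (auto simp: basic_def Gam_def indec_def)
  obtain \<theta> where \<theta>: "\<theta> ` G \<subseteq> Gam" "\<forall>M\<in>G. leqG act R sig (G \<union> Gam) M (\<theta> M)"
    using G(3) Gm unfolding minimal_def by blast
  have GO: "G \<subseteq> Obj" using G(1) by (simp add: generators_def)
  have sub: "G \<subseteq> Gam"
  proof
    fix M assume M: "M \<in> G"
    obtain q where q: "M = {#q#}" using M G(2) basic_single by blast
    have qn: "ix q < n" using M q GO by (auto simp: Obj_def)
    show "M \<in> Gam"
    proof (rule ccontr)
      assume nM: "M \<notin> Gam"
      have "\<theta> M \<in> Gam" using \<theta> M by auto
      then obtain b where b: "\<theta> M = {#mk b 0#}" by (auto simp: Gam_def)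
      have "M \<noteq> \<theta> M" using nM \<open>\<theta> M \<in> Gam\<close> by auto
      then obtain C r1 s1 r2 s2 where C: "C \<in> G \<union> Gam" "gen_idx act R M C r1 s1"
        "gen_idx act R (\<theta> M) C r2 s2" "sig r1 - sig s1 < sig r2 - sig s2"
        using \<theta>(2) M unfolding leqG_def by blast
      have "basic (G \<union> Gam)" using G(2) Gm by (auto simp: basic_def)
      then obtain g where g: "C = {#g#}" using C(1) basic_single by blast
      have gn: "ix g < n" using C(1) g GO Gam_Obj by (auto simp: Obj_def)
      have e1: "(sig r1 - sig s1) * th (ix g) = th (ix q)" using idx_eq[of "M" g r1 s1] C g gn q by simp
      have e2: "(sig r2 - sig s2) * th (ix g) = 1" using idx_eq[of "\<theta> M" g r2 s2] C g gn b by (simp add: mk_ix th0)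
      have "0 < th (ix g)" using th_ge[OF gn] by simp
      then have "(sig r1 - sig s1) * th (ix g) < (sig r2 - sig s2) * th (ix g)"
        using C(4) by (rule mult_strict_right_mono[rotated])
      then have "th (ix q) < 1" using e1 e2 by simp
      then show False using th_ge[OF qn] by simp
    qed
  qed
  have "Gam \<subseteq> G"
  proof
    fix M assume "M \<in> Gam"
    then obtain a where a: "a \<in> K" "M = {#mk a 0#}" by (auto simp: Gam_def)
    obtain q where q: "{#q#} \<in> G" "keyf q = a" using has_key[OF G(1) G(2) a(1)] by blast
    then obtain b where "{#q#} = {#mk b 0#}" using sub by (auto simp: Gam_def)
    then have "q = mk a 0" using q(2) mk_key by auto
    then show "M \<in> G" using q a by simp
  qed
  with sub show ?thesis by auto
qed

end

definition aF :: "folding \<Rightarrow> real" where "aF F = pi / real (2 * npar F + 1)"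

lemma cheb_sin2: "chebU k (cos a) * sin a = sin (real (Suc k) * a) \<and>
   chebU (Suc k) (cos a) * sin a = sin (real (Suc (Suc k)) * a)"
proof (induction k)
  case 0 then show ?case by (simp add: sin_double)
next
  case (Suc k)
  have e1: "real (Suc (Suc (Suc k))) * a = real (Suc (Suc k)) * a + a" by (simp add: algebra_simps)
  have e2: "real (Suc k) * a = real (Suc (Suc k)) * a - a" by (simp add: algebra_simps)
  have "chebU (Suc (Suc k)) (cos a) * sin a = 2 * cos a * (chebU (Suc k) (cos a) * sin a) - chebU k (cos a) * sin a"
    by (simp add: algebra_simps)
  also have "\<dots> = 2 * cos a * sin (real (Suc (Suc k)) * a) - sin (real (Suc k) * a)" using Suc by simp
  also have "\<dots> = sin (real (Suc (Suc (Suc k))) * a)"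
    unfolding e1 e2 sin_add sin_diff by (simp add: algebra_simps)
  finally show ?case using Suc by simp
qed

lemma cheb_sin: "chebU k (cos a) * sin a = sin (real (Suc k) * a)"
  using cheb_sin2 by blast

lemma aF_bounds: "1 \<le> npar F \<Longrightarrow> 0 < aF F \<and> aF F < pi"
  unfolding aF_def by (auto simp: field_simps)

lemma sin_aF_pos: "1 \<le> npar F \<Longrightarrow> 0 < sin (aF F)"
  using aF_bounds sin_gt_zero by blast

lemma theta_sin: "1 \<le> npar F \<Longrightarrow> theta F k = sin (real (Suc k) * aF F) / sin (aF F)"
  using cheb_sin[of k "aF F"] sin_aF_pos[of F] unfolding theta_def aF_def[symmetric]
  by (simp add: field_simps)

lemma theta0: "theta F 0 = 1" by (simp add: theta_def)

lemma theta_gt: assumes "1 \<le> npar F" "0 < k" "k < npar F" shows "1 < theta F k"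
proof -
  let ?a = "aF F"
  have a: "0 < ?a" using aF_bounds assms(1) by blast
  have "real (Suc k) * ?a \<le> real (npar F) * ?a" using assms a by (intro mult_right_mono) auto
  also have "\<dots> \<le> pi / 2" unfolding aF_def by (simp add: field_simps)
  finally have le: "real (Suc k) * ?a \<le> pi/2" .
  have lt: "?a < real (Suc k) * ?a" using a assms(2) by simp
  have m: "-(pi/2) \<le> ?a" using a pi_gt_zero by linarith
  have "sin ?a < sin (real (Suc k) * ?a)" by (rule sin_monotone_2pi[OF m lt le])
  then show ?thesis using theta_sin[OF assms(1)] sin_aF_pos[OF assms(1)] by simp
qed

lemma theta_red: assumes "1 \<le> npar F" "i < 2 * npar F" shows "theta F (red F i) = theta F i"
proof (cases "i < npar F")
  case True then show ?thesis by (simp add: red_def)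
next
  case False
  let ?n = "npar F"
  have r: "red F i = 2 * ?n - 1 - i" using False by (simp add: red_def)
  have "real (Suc (2 * ?n - 1 - i)) = real (2 * ?n + 1) - real (Suc i)" using assms by (simp add: of_nat_diff)
  then have "real (Suc (red F i)) * aF F = pi - real (Suc i) * aF F"
    unfolding r aF_def by (simp add: field_simps)
  then show ?thesis using theta_sin[OF assms(1)] by simp
qed

lemma telesc: "2 * sin a * (\<Sum>j<Suc m. sin ((real d + 2 * real j + 1) * a))
   = cos (real d * a) - cos ((real d + 2 * real m + 2) * a)"
proof (induction m)
  case 0
  let ?B = "(real d + 1) * a"
  have e1: "real d * a = ?B - a" and e2: "(real d + 2 * real 0 + 2) * a = ?B + a"
    and e3: "(\<Sum>j<Suc 0. sin ((real d + 2 * real j + 1) * a)) = sin ?B"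
    by (simp_all add: algebra_simps)
  show ?case unfolding e1 e2 e3 cos_add cos_diff by (simp add: algebra_simps)
next
  case (Suc m)
  let ?B = "(real d + 2 * real (Suc m) + 1) * a"
  have e1: "(real d + 2 * real m + 2) * a = ?B - a" and e2: "(real d + 2 * real (Suc m) + 2) * a = ?B + a"
    by (simp_all add: algebra_simps)
  have "2 * sin a * (\<Sum>j<Suc (Suc m). sin ((real d + 2 * real j + 1) * a))
      = 2 * sin a * (\<Sum>j<Suc m. sin ((real d + 2 * real j + 1) * a)) + 2 * sin a * sin ?B"
    by (simp add: algebra_simps)
  also have "\<dots> = cos (real d * a) - cos (?B - a) + 2 * sin a * sin ?B" using Suc e1 by simp
  also have "\<dots> = cos (real d * a) - cos (?B + a)" unfolding cos_add cos_diff by (simp add: algebra_simps)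
  finally show ?case using e2 by simp
qed

lemma sum_mset_upt: "(\<Sum>x\<in>#image_mset f (mset [0..<Suc m]). g x) = (\<Sum>j<Suc m. g (f j))"
proof -
  have "(\<Sum>x\<in>#image_mset f (mset xs). g x) = sum_list (map (\<lambda>x. g (f x)) xs)" for xs :: "nat list"
    by (induction xs) auto
  then show ?thesis by (simp only: interv_sum_list_conv_sum_set_nat set_upt atLeast0LessThan)
qed

lemma div_aux: "0 < (s::real) \<Longrightarrow> X / s = (2 * s * X) / (2 * s * s)"
  by (simp add: field_simps)

lemma fusion_sum:
  assumes n1: "1 \<le> npar F" and k: "k < npar F" and l: "l < npar F"
  shows "(\<Sum>k'\<in>#fusion F k l. theta F k') = theta F k * theta F l"
proof -
  let ?a = "aF F" and ?M = "max k l" and ?m = "min k l"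
  define d where "d = ?M - ?m"
  have s: "0 < sin ?a" using sin_aF_pos[OF n1] .
  have "(\<Sum>k'\<in>#fusion F k l. theta F k') = (\<Sum>j<Suc ?m. theta F (red F (d + 2 * j)))"
    unfolding fusion_def d_def sum_mset_upt by simp
  also have "\<dots> = (\<Sum>j<Suc ?m. theta F (d + 2 * j))"
    by (rule sum.cong) (use k l n1 in \<open>auto simp: d_def intro!: theta_red\<close>)
  also have "\<dots> = (\<Sum>j<Suc ?m. sin ((real d + 2 * real j + 1) * ?a)) / sin ?a"
    unfolding theta_sin[OF n1] sum_divide_distrib by (simp add: algebra_simps)
  also have "\<dots> = (cos (real d * ?a) - cos ((real d + 2 * real ?m + 2) * ?a)) / (2 * sin ?a * sin ?a)"
    by (subst div_aux[OF s], subst telesc) (rule refl)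
  also have "cos (real d * ?a) - cos ((real d + 2 * real ?m + 2) * ?a)
      = 2 * sin (real (Suc ?M) * ?a) * sin (real (Suc ?m) * ?a)"
  proof -
    have e1: "real d * ?a = real (Suc ?M) * ?a - real (Suc ?m) * ?a"
      and e2: "(real d + 2 * real ?m + 2) * ?a = real (Suc ?M) * ?a + real (Suc ?m) * ?a"
      unfolding d_def by (simp_all add: of_nat_diff algebra_simps)
    show ?thesis unfolding e1 e2 cos_add cos_diff by (simp add: algebra_simps)
  qed
  finally have fin: "(\<Sum>k'\<in>#fusion F k l. theta F k') = 2 * sin (real (Suc ?M) * ?a) * sin (real (Suc ?m) * ?a) / (2 * sin ?a * sin ?a)" .
  have pm: "sin (real (Suc ?M) * ?a) * sin (real (Suc ?m) * ?a) = sin (real (Suc k) * ?a) * sin (real (Suc l) * ?a)"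
    by (cases "k \<le> l") (auto simp: max_def min_def)
  have "theta F k * theta F l = 2 * sin (real (Suc ?M) * ?a) * sin (real (Suc ?m) * ?a) / (2 * sin ?a * sin ?a)"
    unfolding theta_sin[OF n1] using s pm by (simp add: field_simps)
  then show ?thesis by (rule trans[OF fin sym])
qed


lemma gram_sym: "gram F i j = gram F j i"
  unfolding gram_def by (cases F) (auto simp: max.commute)

lemma gram_ii: "gram F i i = 1"
  unfolding gram_def by (cases F) auto

lemma bform_sym: "bform F v w = bform F w v"
  unfolding bform_def by (subst sum.swap) (simp add: gram_sym algebra_simps)

lemma bform_lin: "bform F (\<lambda>j. v j + c * w j) u = bform F v u + c * bform F w u"
  unfolding bform_def by (simp add: algebra_simps sum.distrib sum_distrib_left)

lemma bform_lin2: "bform F u (\<lambda>j. v j + c * w j) = bform F u v + c * bform F u w"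
  using bform_lin[of F v c w u] by (simp add: bform_sym)

lemma bform_scale: "bform F (\<lambda>j. c * v j) (\<lambda>j. c * v j) = c^2 * bform F v v"
  unfolding bform_def by (simp add: algebra_simps sum_distrib_left power2_eq_square)

lemma delta_r: "finite S \<Longrightarrow> i \<in> S \<Longrightarrow> (\<Sum>k\<in>S. f k * (if k = i then 1 else 0)) = (f i :: real)"
proof -
  assume a: "finite S" "i \<in> S"
  have "(\<Sum>k\<in>S. f k * (if k = i then 1 else 0)) = (\<Sum>k\<in>S. if k = i then f k else 0)"
    by (rule sum.cong) auto
  then show ?thesis using a by (simp add: sum.delta)
qed

lemma bform_sroot_r: "i < rk F \<Longrightarrow> bform F v (sroot i) = (\<Sum>j<rk F. v j * gram F j i)"
  unfolding bform_def sroot_def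
  by (rule sum.cong) (simp_all add: delta_r[where f="\<lambda>k. v _ * gram F _ k"])

lemma bform_sroot: "i < rk F \<Longrightarrow> bform F (sroot i) (sroot i) = 1"
proof -
  assume i: "i < rk F"
  have "(\<Sum>j<rk F. sroot i j * gram F j i) = (\<Sum>j<rk F. gram F j i * (if j = i then 1 else 0))"
    by (rule sum.cong) (auto simp: sroot_def)
  also have "\<dots> = 1" using i by (simp add: delta_r gram_ii)
  finally show ?thesis using bform_sroot_r[OF i] by simp
qed

lemma refl_eq: "refl F i v = (\<lambda>j. v j + (- 2 * bform F v (sroot i)) * sroot i j)"
  unfolding refl_def by auto

lemma roots_norm: "v \<in> roots F \<Longrightarrow> bform F v v = 1"
proof (induction rule: roots.induct)
  case (simple i) then show ?case by (rule bform_sroot)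
next
  case (reflect v i)
  let ?c = "- 2 * bform F v (sroot i)"
  show ?case unfolding refl_eq bform_lin bform_lin2 using reflect bform_sroot[OF reflect(2)]
    by (simp add: bform_sym[of F "sroot i" v] algebra_simps)
qed

lemma roots_neg: "v \<in> roots F \<Longrightarrow> (\<lambda>j. - v j) \<in> roots F"
proof (induction rule: roots.induct)
  case (simple i)
  have "refl F i (sroot i) = (\<lambda>j. - sroot i j)"
    unfolding refl_eq using bform_sroot[OF simple] by auto
  then show ?case using roots.reflect[OF roots.simple[OF simple] simple] by simp
next
  case (reflect v i)
  have "bform F (\<lambda>j. - v j) (sroot i) = - bform F v (sroot i)"
    using bform_lin[of F "\<lambda>j. 0" "-1" v "sroot i"] by (simp add: bform_def)
  then have "refl F i (\<lambda>j. - v j) = (\<lambda>j. - refl F i v j)"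
    unfolding refl_eq by auto
  then show ?case using roots.reflect[OF reflect(3) reflect(2)] by simp
qed

lemma scaled_not_root:
  assumes "v \<in> roots F" "1 < \<bar>c\<bar>" shows "(\<lambda>j. c * v j) \<notin> roots F"
proof
  assume "(\<lambda>j. c * v j) \<in> roots F"
  then have "c^2 * 1 = 1" using roots_norm[OF assms(1)] roots_norm bform_scale by metis
  then have "c = 1 \<or> c = -1" by (simp add: power2_eq_1_iff)
  then show False using assms(2) by auto
qed

lemma valid_n: "valid_folding F \<Longrightarrow> 2 \<le> npar F"
  unfolding valid_folding_def by (cases F) auto

lemma GammaM_eq:
  assumes "valid_folding F"
  shows "GammaM F = {{#Pair a 0#} | a. a \<in> pos_roots F}"
proof -
  have n: "1 \<le> npar F" using valid_n[OF assms] by simp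
  show ?thesis
  proof (intro set_eqI iffI)
    fix X :: "mlabel multiset" assume "X \<in> GammaM F"
    then have X: "X \<in> ObjM F" "indec X" "piF F X \<in> pos_roots F" by (auto simp: GammaM_def)
    obtain p where p: "X = {#p#}" using indec_single[OF X(2)] by blast
    obtain a k where ak: "p = (a, k)" by (cases p)
    have a: "a \<in> pos_roots F" "k < npar F" using X(1) p ak by (auto simp: ObjM_def)
    have pi: "piF F X = (\<lambda>i. theta F k * a i)" using p ak by (simp add: piF_def)
    have "k = 0"
    proof (rule ccontr)
      assume "k \<noteq> 0"
      then have "1 < \<bar>theta F k\<bar>" using theta_gt[OF n _ a(2)] by simp
      then show False using scaled_not_root[of a F "theta F k"] X(3) pi a(1) by (auto simp: pos_roots_def)
    qed
    then show "X \<in> {{#Pair a 0#} | a. a \<in> pos_roots F}" using p ak a by auto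
  next
    fix X :: "mlabel multiset" assume "X \<in> {{#Pair a 0#} | a. a \<in> pos_roots F}"
    then obtain a where a: "X = {#(a, 0)#}" "a \<in> pos_roots F" by auto
    have "piF F X = a" using a by (simp add: piF_def theta0)
    then show "X \<in> GammaM F" using a n by (auto simp: GammaM_def ObjM_def indec_def)
  qed
qed

lemma GammaD_eq:
  assumes "valid_folding F"
  shows "GammaD F = {{#(\<lambda>(a, l) k. (a, k, l)) b 0#} | b. b \<in> pos_roots F \<times> UNIV}"
proof -
  have n: "1 \<le> npar F" using valid_n[OF assms] by simp
  show ?thesis
  proof (intro set_eqI iffI)
    fix X :: "dlabel multiset" assume "X \<in> GammaD F"
    then have X: "X \<in> ObjD F" "indec X" "partialF F X \<in> roots F" by (auto simp: GammaD_def)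
    obtain p where p: "X = {#p#}" using indec_single[OF X(2)] by blast
    obtain a k l where ak: "p = (a, k, l)" by (cases p) auto
    have a: "a \<in> pos_roots F" "k < npar F" using X(1) p ak by (auto simp: ObjD_def)
    define c where "c = (if even l then 1 else -1) * theta F k"
    have pi: "partialF F X = (\<lambda>i. c * a i)" using p ak by (simp add: partialF_def c_def)
    have "k = 0"
    proof (rule ccontr)
      assume "k \<noteq> 0"
      then have "1 < \<bar>c\<bar>" using theta_gt[OF n _ a(2)] by (simp add: c_def)
      then show False using scaled_not_root[of a F c] X(3) pi a(1) by (auto simp: pos_roots_def)
    qed
    then show "X \<in> {{#(\<lambda>(a, l) k. (a, k, l)) b 0#} | b. b \<in> pos_roots F \<times> UNIV}" using p ak a
      by (intro CollectI exI[of _ "(a, l)"]) auto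
  next
    fix X :: "dlabel multiset" assume "X \<in> {{#(\<lambda>(a, l) k. (a, k, l)) b 0#} | b. b \<in> pos_roots F \<times> UNIV}"
    then obtain a l where a: "X = {#(a, 0, l)#}" "a \<in> pos_roots F" by auto
    have ar: "a \<in> roots F" using a(2) by (simp add: pos_roots_def)
    have "partialF F X = (if even l then a else (\<lambda>j. - a j))" using a by (auto simp: partialF_def theta0)
    then have "partialF F X \<in> roots F" using ar roots_neg[OF ar] by simp
    then show "X \<in> GammaD F" using a n by (auto simp: GammaD_def ObjD_def indec_def)
  qed
qed

theorem theorem6p13:
  assumes "valid_folding F"
  shows "min_gens (actM F) (Rplus F) (sigma F) (ObjM F) (GammaM F)
       \<and> (\<forall>\<Gamma>'. min_gens (actM F) (Rplus F) (sigma F) (ObjM F) \<Gamma>' \<longrightarrow> \<Gamma>' = GammaM F)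
       \<and> min_gens (actD F) (Rplus F) (sigma F) (ObjD F) (GammaD F)
       \<and> (\<forall>\<Gamma>'. min_gens (actD F) (Rplus F) (sigma F) (ObjD F) \<Gamma>' \<longrightarrow> \<Gamma>' = GammaD F)"
proof -
  have n: "1 \<le> npar F" using valid_n[OF assms] by simp
  have fu0: "fusion F k 0 = {#k#}" if "k < npar F" for k
    using that by (simp add: fusion_def red_def)
  interpret M: genset "npar F" "theta F" "fusion F" Pair fst snd "pos_roots F" "actM F" "ObjM F"
    "Rplus F" "sigma F" "GammaM F"
    by unfold_locales (use n in \<open>auto simp: theta0 theta_gt fu0 fusion_sum actM_def ObjM_def
        Rplus_def sigma_def[abs_def] GammaM_eq[OF assms]\<close>)
  interpret D: genset "npar F" "theta F" "fusion F" "\<lambda>(a, l) k. (a, k, l)" "\<lambda>p. (fst p, snd (snd p))"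
    "\<lambda>p. fst (snd p)" "pos_roots F \<times> UNIV" "actD F" "ObjD F" "Rplus F" "sigma F" "GammaD F"
    by unfold_locales (use n in \<open>auto simp: theta0 theta_gt fu0 fusion_sum actD_def ObjD_def
        Rplus_def sigma_def[abs_def] GammaD_eq[OF assms]\<close>)
  show ?thesis using M.mingens M.uniq D.mingens D.uniq by blast
qed

end
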